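(* Let $\mathcal E$ and $\mathcal F$ be product systems with normalized units $u^0$ and $v^0$ respectively, let $C_t=|u^0_t\rangle\langle v^0_t|:\mathcal F_t\to\mathcal E_t$, and let $\sigma$ be the common unit of $\mathcal E\otimes_C\mathcal F$ obtained by identifying $u^0$ and $v^0$ (i.e. $\sigma_t=I_t(u^0_t)=J_t(v^0_t)$). Then $\mathcal R^{\mathcal E\otimes_C\mathcal F}_\sigma=\mathcal R^{\mathcal E}_{u^0}\oplus\mathcal R^{\mathcal F}_{v^0}$, an orthogonal direct sum (with $\mathcal R^{\mathcal E}_{u^0}$ and $\mathcal R^{\mathcal F}_{v^0}$ embedded via $I_1$ and $J_1$).
   Context: Product systems are measurable families of separable Hilbert spaces $(\mathcal E_t)_{t>0}$ with associative unitaries $W_{s,t}:\mathcal E_{s+t}\to\mathcal E_s\otimes\mathcal E_t$. A unit is a measurable section $(u_t)$ of nonzero vectors with $W_{s,t}u_{s+t}=u_s\otimes u_t$, normalized if $\|u_t\|=1$. For a contractive morphism $C$ (contractions $C_t:\mathcal F_t\to\mathcal E_t$ with $W^{\mathcal E}_{s,t}C_{s+t}=(C_s\otimes C_t)W^{\mathcal F}_{s,t}$), the amalgamated product $\mathcal E\otimes_C\mathcal F$ is the algebraic product system $\mathcal G$ with isometric morphisms $I:\mathcal E\to\mathcal G$, $J:\mathcal F\to\mathcal G$ satisfying $\langle I_sx,J_sy\rangle=\langle x,C_sy\rangle$ and generated by $I(\mathcal E)$ and $J(\mathcal F)$. An additive unit of a unit $u$ is a measurable section $(a_t)$ with $W_{s,t}a_{s+t}=a_s\otimes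 u_t+u_s\otimes a_t$; a root additionally satisfies $\langle a_t,u_t\rangle=0$ for all $t$; $\mathcal R^{\mathcal E}_u:=\{a_1:a \text{ a root of } u\}\subset\mathcal E_1$. *)

theory Defs
  imports "HOL-Analysis.Analysis"
begin

text \<open>The library only has real inner product spaces. The complex inner product
  (conjugate-linear in the first, linear in the second argument) is then recovered from
  the real one; its real part is the real inner product.\<close>

class complex_inner = real_inner +
  fixes scaleC :: "complex \<Rightarrow> 'a \<Rightarrow> 'a"
  assumes scaleC_add_right: "scaleC a (x + y) = scaleC a x + scaleC a y"
    and scaleC_add_left: "scaleC (a + b) x = scaleC a x + scaleC b x"
    and scaleC_scaleC: "scaleC a (scaleC b x) = scaleC (a * b) x"
    and scaleC_of_real: "scaleC (complex_of_real r) x = scaleR r x"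
    and inner_scaleC_ii: "inner (scaleC \<i> x) (scaleC \<i> y) = inner x y"

definition cinner :: "'a::complex_inner \<Rightarrow> 'a \<Rightarrow> complex" where
  "cinner x y = complex_of_real (inner x y) - \<i> * complex_of_real (inner x (scaleC \<i> y))"

definition csubspace :: "'a::complex_inner set \<Rightarrow> bool" where
  "csubspace V \<longleftrightarrow> 0 \<in> V \<and> (\<forall>x\<in>V. \<forall>y\<in>V. x + y \<in> V) \<and> (\<forall>c. \<forall>x\<in>V. scaleC c x \<in> V)"

definition cspan :: "'a::complex_inner set \<Rightarrow> 'a set" where
  "cspan A = \<Inter>{V. csubspace V \<and> A \<subseteq> V}"

text \<open>A product system over the ambient complex inner product space \<open>'a\<close> is given by the
  fibres \<open>E t \<subseteq> 'a\<close> (\<open>t > 0\<close>), separable Hilbert spaces, and the multiplication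
  \<open>m s t x y = W_{s,t}^* (x \<otimes> y)\<close>. The unitaries \<open>W_{s,t}\<close> correspond exactly to maps
  \<open>m s t\<close> which preserve inner products of elementary tensors and have total range;
  associativity of \<open>W\<close> is associativity of \<open>m\<close>.\<close>

definition product_system ::
  "(real \<Rightarrow> 'a::complex_inner set) \<Rightarrow> (real \<Rightarrow> real \<Rightarrow> 'a \<Rightarrow> 'a \<Rightarrow> 'a) \<Rightarrow> bool" where
  "product_system E m \<longleftrightarrow>
     (\<forall>t>0. csubspace (E t) \<and> complete (E t) \<and>
            (\<exists>D. countable D \<and> D \<subseteq> E t \<and> E t \<subseteq> closure D)) \<and>
     (\<forall>s>0. \<forall>t>0. \<forall>x\<in>E s. \<forall>y\<in>E t. m s t x y \<in> E (s + t)) \<and>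
     (\<forall>s>0. \<forall>t>0. \<forall>x\<in>E s. \<forall>x'\<in>E s. \<forall>y\<in>E t. \<forall>y'\<in>E t.
        cinner (m s t x y) (m s t x' y') = cinner x x' * cinner y y') \<and>
     (\<forall>s>0. \<forall>t>0. E (s + t) \<subseteq> closure (cspan {m s t x y |x y. x \<in> E s \<and> y \<in> E t})) \<and>
     (\<forall>r>0. \<forall>s>0. \<forall>t>0. \<forall>x\<in>E r. \<forall>y\<in>E s. \<forall>z\<in>E t.
        m (r + s) t (m r s x y) z = m r (s + t) x (m s t y z))"

definition is_unit ::
  "(real \<Rightarrow> 'a::complex_inner set) \<Rightarrow> (real \<Rightarrow> real \<Rightarrow> 'a \<Rightarrow> 'a \<Rightarrow> 'a) \<Rightarrow> (real \<Rightarrow> 'a) \<Rightarrow> bool" where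
  "is_unit E m u \<longleftrightarrow> (\<forall>t>0. u t \<in> E t \<and> u t \<noteq> 0) \<and>
     (\<forall>s>0. \<forall>t>0. u (s + t) = m s t (u s) (u t))"

definition normalized_unit ::
  "(real \<Rightarrow> 'a::complex_inner set) \<Rightarrow> (real \<Rightarrow> real \<Rightarrow> 'a \<Rightarrow> 'a \<Rightarrow> 'a) \<Rightarrow> (real \<Rightarrow> 'a) \<Rightarrow> bool" where
  "normalized_unit E m u \<longleftrightarrow> is_unit E m u \<and> (\<forall>t>0. norm (u t) = 1)"

definition additive_unit ::
  "(real \<Rightarrow> 'a::complex_inner set) \<Rightarrow> (real \<Rightarrow> real \<Rightarrow> 'a \<Rightarrow> 'a \<Rightarrow> 'a) \<Rightarrow> (real \<Rightarrow> 'a) \<Rightarrow> (real \<Rightarrow> 'a) \<Rightarrow> bool" where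
  "additive_unit E m u a \<longleftrightarrow> (\<forall>t>0. a t \<in> E t) \<and>
     (\<forall>s>0. \<forall>t>0. a (s + t) = m s t (a s) (u t) + m s t (u s) (a t))"

definition is_root ::
  "(real \<Rightarrow> 'a::complex_inner set) \<Rightarrow> (real \<Rightarrow> real \<Rightarrow> 'a \<Rightarrow> 'a \<Rightarrow> 'a) \<Rightarrow> (real \<Rightarrow> 'a) \<Rightarrow> (real \<Rightarrow> 'a) \<Rightarrow> bool" where
  "is_root E m u a \<longleftrightarrow> additive_unit E m u a \<and> (\<forall>t>0. cinner (a t) (u t) = 0)"

definition roots ::
  "(real \<Rightarrow> 'a::complex_inner set) \<Rightarrow> (real \<Rightarrow> real \<Rightarrow> 'a \<Rightarrow> 'a \<Rightarrow> 'a) \<Rightarrow> (real \<Rightarrow> 'a) \<Rightarrow> 'a set" where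
  "roots E m u = {a 1 |a. is_root E m u a}"

definition isometric_morphism ::
  "(real \<Rightarrow> 'a::complex_inner set) \<Rightarrow> (real \<Rightarrow> real \<Rightarrow> 'a \<Rightarrow> 'a \<Rightarrow> 'a) \<Rightarrow>
   (real \<Rightarrow> 'b::complex_inner set) \<Rightarrow> (real \<Rightarrow> real \<Rightarrow> 'b \<Rightarrow> 'b \<Rightarrow> 'b) \<Rightarrow>
   (real \<Rightarrow> 'a \<Rightarrow> 'b) \<Rightarrow> bool" where
  "isometric_morphism E mE G mG I \<longleftrightarrow>
     (\<forall>t>0. \<forall>x\<in>E t. I t x \<in> G t) \<and>
     (\<forall>t>0. \<forall>x\<in>E t. \<forall>y\<in>E t. I t (x + y) = I t x + I t y \<and> (\<forall>c. I t (scaleC c x) = scaleC c (I t x))) \<and>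
     (\<forall>t>0. \<forall>x\<in>E t. \<forall>y\<in>E t. cinner (I t x) (I t y) = cinner x y) \<and>
     (\<forall>s>0. \<forall>t>0. \<forall>x\<in>E s. \<forall>y\<in>E t. I (s + t) (mE s t x y) = mG s t (I s x) (I t y))"

text \<open>\<open>G\<close> is generated by \<open>I(E)\<close> and \<open>J(F)\<close>: the only family of closed subspaces of the
  fibres of \<open>G\<close> that contains \<open>I_t(E_t)\<close> and \<open>J_t(F_t)\<close> and is closed under the product
  is \<open>G\<close> itself (the smallest such family is the generated product subsystem).\<close>

definition generated_by ::
  "(real \<Rightarrow> 'g::complex_inner set) \<Rightarrow> (real \<Rightarrow> real \<Rightarrow> 'g \<Rightarrow> 'g \<Rightarrow> 'g) \<Rightarrow> (real \<Rightarrow> 'g set) \<Rightarrow> bool" where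
  "generated_by G mG S \<longleftrightarrow>
     (\<forall>H. (\<forall>t>0. csubspace (H t) \<and> closed (H t) \<and> S t \<subseteq> H t \<and> H t \<subseteq> G t) \<and>
          (\<forall>s>0. \<forall>t>0. \<forall>x\<in>H s. \<forall>y\<in>H t. mG s t x y \<in> H (s + t))
          \<longrightarrow> (\<forall>t>0. H t = G t))"

text \<open>Amalgamated product \<open>E \<otimes>_C F\<close> with respect to \<open>C_t : F_t \<rightarrow> E_t\<close> (algebraic product
  system, i.e. no measurable structure is required).\<close>

definition amalgamated_product ::
  "(real \<Rightarrow> 'e::complex_inner set) \<Rightarrow> (real \<Rightarrow> real \<Rightarrow> 'e \<Rightarrow> 'e \<Rightarrow> 'e) \<Rightarrow>
   (real \<Rightarrow> 'f::complex_inner set) \<Rightarrow> (real \<Rightarrow> real \<Rightarrow> 'f \<Rightarrow> 'f \<Rightarrow> 'f) \<Rightarrow>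
   (real \<Rightarrow> 'f \<Rightarrow> 'e) \<Rightarrow>
   (real \<Rightarrow> 'g::complex_inner set) \<Rightarrow> (real \<Rightarrow> real \<Rightarrow> 'g \<Rightarrow> 'g \<Rightarrow> 'g) \<Rightarrow>
   (real \<Rightarrow> 'e \<Rightarrow> 'g) \<Rightarrow> (real \<Rightarrow> 'f \<Rightarrow> 'g) \<Rightarrow> bool" where
  "amalgamated_product E mE F mF C G mG I J \<longleftrightarrow>
     product_system G mG \<and>
     isometric_morphism E mE G mG I \<and> isometric_morphism F mF G mG J \<and>
     (\<forall>t>0. \<forall>x\<in>E t. \<forall>y\<in>F t. cinner (I t x) (J t y) = cinner x (C t y)) \<and>
     generated_by G mG (\<lambda>t. I t ` E t \<union> J t ` F t)"

end

theory Submission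
  imports Defs
begin


lemma scaleC_zero_left[simp]: "scaleC 0 (x::'a::complex_inner) = 0"
  using scaleC_of_real[of 0 x] by simp
lemma scaleC_one[simp]: "scaleC 1 (x::'a::complex_inner) = x"
  using scaleC_of_real[of 1 x] by simp
lemma scaleC_zero_right[simp]: "scaleC c (0::'a::complex_inner) = 0"
  using scaleC_add_right[of c 0 0] by simp
lemma scaleC_minus_right: "scaleC c (- (x::'a::complex_inner)) = - scaleC c x"
  using scaleC_add_right[of c x "-x"] by (simp add: eq_neg_iff_add_eq_0 add.commute)
lemma scaleC_diff_right: "scaleC c ((x::'a::complex_inner) - y) = scaleC c x - scaleC c y"
  using scaleC_add_right[of c x "-y"] by (simp add: scaleC_minus_right)
lemma scaleC_minus1: "scaleC (-1) (x::'a::complex_inner) = - x"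
  using scaleC_of_real[of "-1" x] by simp
lemma scaleC_ii_scaleR: "scaleC \<i> (scaleR r (y::'a::complex_inner)) = scaleR r (scaleC \<i> y)"
  by (metis scaleC_of_real scaleC_scaleC mult.commute)
lemma scaleC_ii_ii: "scaleC \<i> (scaleC \<i> (x::'a::complex_inner)) = - x"
  by (simp add: scaleC_scaleC scaleC_minus1)
lemma inner_ii_swap: "inner (scaleC \<i> (x::'a::complex_inner)) y = - inner x (scaleC \<i> y)"
proof -
  have "inner (scaleC \<i> x) (scaleC \<i> (scaleC \<i> y)) = inner x (scaleC \<i> y)"
    by (rule inner_scaleC_ii)
  then show ?thesis by (simp add: scaleC_ii_ii)
qed
lemma scaleC_decomp: "scaleC c (y::'a::complex_inner) = scaleR (Re c) y + scaleR (Im c) (scaleC \<i> y)"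
proof -
  have "c = complex_of_real (Re c) + complex_of_real (Im c) * \<i>"
    by (simp add: complex_eq_iff)
  then have "scaleC c y = scaleC (complex_of_real (Re c)) y + scaleC (complex_of_real (Im c) * \<i>) y"
    by (metis scaleC_add_left)
  also have "\<dots> = scaleR (Re c) y + scaleR (Im c) (scaleC \<i> y)"
    by (simp add: scaleC_of_real flip: scaleC_scaleC)
  finally show ?thesis .
qed

lemma cinner_add_right: "cinner x (y + z) = cinner x y + cinner x z"
  by (simp add: cinner_def scaleC_add_right inner_add_right algebra_simps)
lemma cinner_add_left: "cinner (x + y) z = cinner x z + cinner y z"
  by (simp add: cinner_def inner_add_left algebra_simps)
lemma cinner_zero_right[simp]: "cinner x 0 = 0"
  by (simp add: cinner_def)
lemma cinner_zero_left[simp]: "cinner 0 x = 0"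
  by (simp add: cinner_def)
lemma cinner_commute: "cinner y x = cnj (cinner x y)"
proof -
  have "inner x (scaleC \<i> y) = - inner y (scaleC \<i> x)" by (metis inner_ii_swap inner_commute)
  then show ?thesis by (simp add: cinner_def complex_eq_iff inner_commute)
qed
lemma cinner_scaleR_right: "cinner x (scaleR r y) = complex_of_real r * cinner x y"
  by (simp add: cinner_def scaleC_ii_scaleR algebra_simps)
lemma cinner_ii_right: "cinner x (scaleC \<i> y) = \<i> * cinner x y"
  by (simp add: cinner_def scaleC_ii_ii algebra_simps)
lemma cinner_scaleC_right: "cinner x (scaleC c y) = c * cinner x y"
proof -
  have "cinner x (scaleC c y) = complex_of_real (Re c) * cinner x y + complex_of_real (Im c) * (\<i> * cinner x y)"
    by (subst scaleC_decomp) (simp only: cinner_add_right cinner_scaleR_right cinner_ii_right)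
  also have "\<dots> = (complex_of_real (Re c) + complex_of_real (Im c) * \<i>) * cinner x y"
    by (simp add: algebra_simps)
  also have "complex_of_real (Re c) + complex_of_real (Im c) * \<i> = c" by (simp add: complex_eq_iff)
  finally show ?thesis .
qed
lemma cinner_scaleC_left: "cinner (scaleC c x) y = cnj c * cinner x y"
  by (metis cinner_commute cinner_scaleC_right complex_cnj_cnj complex_cnj_mult)
lemma cinner_minus_right: "cinner x (- y) = - cinner x y"
  using cinner_scaleC_right[of x "-1" y] by (simp add: scaleC_minus1)
lemma cinner_minus_left: "cinner (- x) y = - cinner x y"
  by (metis cinner_commute cinner_minus_right complex_cnj_minus)
lemma cinner_diff_right: "cinner x (y - z) = cinner x y - cinner x z"
  using cinner_add_right[of x y "-z"] by (simp add: cinner_minus_right)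
lemma cinner_diff_left: "cinner (x - y) z = cinner x z - cinner y z"
  using cinner_add_left[of x "-y" z] by (simp add: cinner_minus_left)
lemma inner_self_ii: "inner x (scaleC \<i> x) = 0"
  using inner_ii_swap[of x x] by (simp add: inner_commute)
lemma cinner_self: "cinner x x = complex_of_real ((norm x)^2)"
  by (simp add: cinner_def inner_self_ii power2_norm_eq_inner)
lemma cinner_self_zero: "cinner x x = 0 \<longleftrightarrow> x = 0"
  by (simp add: cinner_self)
lemma continuous_cinner_left: "continuous_on UNIV (\<lambda>x. cinner x z)"
  unfolding cinner_def by (intro continuous_intros)
lemma closed_orth: "closed {x. cinner x z = 0}"
  using continuous_cinner_left by (intro closed_Collect_eq) auto

lemma csubspace_orth: "csubspace {x. cinner x z = 0}"
  by (simp add: csubspace_def cinner_add_left cinner_scaleC_left)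
lemma csubspace_Int: "csubspace A \<Longrightarrow> csubspace B \<Longrightarrow> csubspace (A \<inter> B)"
  by (simp add: csubspace_def)
lemma cspan_minimal: "csubspace V \<Longrightarrow> A \<subseteq> V \<Longrightarrow> cspan A \<subseteq> V"
  unfolding cspan_def by blast
lemma csubspace_diff: "csubspace V \<Longrightarrow> x \<in> V \<Longrightarrow> y \<in> V \<Longrightarrow> x - y \<in> V"
  unfolding csubspace_def by (metis scaleC_minus1 diff_conv_add_uminus)
lemma csubspace_scaleR: "csubspace V \<Longrightarrow> x \<in> V \<Longrightarrow> scaleR r x \<in> V"
  unfolding csubspace_def by (metis scaleC_of_real)



lemma parallelogram: "(norm (a + b))^2 + (norm (a - b))^2 = 2 * (norm (a::'a::real_inner))^2 + 2 * (norm b)^2"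
  by (simp add: power2_norm_eq_inner inner_add_left inner_add_right inner_diff_left inner_diff_right inner_commute)

lemma min_orth:
  fixes K :: "'a::real_inner set"
  assumes p: "p \<in> K" and k: "k \<in> K"
    and add: "\<And>r. p + scaleR r k \<in> K"
    and min: "\<And>q. q \<in> K \<Longrightarrow> (norm (c - p))^2 \<le> (norm (c - q))^2"
  shows "inner (c - p) k = 0"
proof (rule ccontr)
  assume ne: "inner (c - p) k \<noteq> 0"
  define \<beta> where "\<beta> = inner (c - p) k"
  define N where "N = (norm k)^2 + 1"
  have Npos: "N > 0" unfolding N_def by (simp add: add_nonneg_pos)
  define r where "r = \<beta> / N"
  have "(norm (c - p))^2 \<le> (norm (c - (p + scaleR r k)))^2" using min add by blast
  also have "c - (p + scaleR r k) = (c - p) - scaleR r k" by simp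
  also have "(norm ((c - p) - scaleR r k))^2 = (norm (c - p))^2 - 2 * r * \<beta> + r^2 * (norm k)^2"
    unfolding power2_norm_eq_inner \<beta>_def
    by (simp add: inner_diff_left inner_diff_right inner_commute power2_eq_square algebra_simps)
  finally have "2 * r * \<beta> \<le> r^2 * (norm k)^2" by simp
  then have "2 * \<beta>^2 / N \<le> \<beta>^2 * (norm k)^2 / N^2" unfolding r_def by (simp add: power2_eq_square field_simps)
  then have "2 * \<beta>^2 * N \<le> \<beta>^2 * (norm k)^2" using Npos by (simp add: field_simps power2_eq_square)
  moreover have "\<beta>^2 > 0" using ne \<beta>_def by simp
  ultimately have "2 * N \<le> (norm k)^2" by (simp add: mult.commute mult.left_commute)
  then show False unfolding N_def by (smt (verit) zero_le_power2)
qed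

lemma proj_exists:
  fixes K :: "'a::complex_inner set"
  assumes comp: "complete K" and sub: "csubspace K"
  shows "\<exists>p\<in>K. \<forall>k\<in>K. cinner k (c - p) = 0"
proof -
  let ?D = "{(norm (c - k))^2 | k. k \<in> K}"
  define \<delta> where "\<delta> = Inf ?D"
  have K0: "0 \<in> K" using sub by (simp add: csubspace_def)
  have Dne: "?D \<noteq> {}" using K0 by blast
  have bdd: "bdd_below ?D" by (rule bdd_belowI[of _ 0]) auto
  have delta_le: "\<delta> \<le> (norm (c - k))^2" if "k \<in> K" for k
    unfolding \<delta>_def using bdd that by (intro cInf_lower) auto
  have "\<exists>k\<in>K. (norm (c - k))^2 < \<delta> + 1 / (real n + 1)" for n
  proof -
    have "Inf ?D < \<delta> + 1 / (real n + 1)" unfolding \<delta>_def by (simp add: add_pos_pos)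
    from cInf_lessD[OF Dne this] show ?thesis by blast
  qed
  then obtain f where fK: "\<And>n. f n \<in> K" and fle: "\<And>n. (norm (c - f n))^2 < \<delta> + 1 / (real n + 1)"
    by metis
  have addK: "x + y \<in> K" if "x \<in> K" "y \<in> K" for x y using sub that by (simp add: csubspace_def)
  have scK: "scaleR r x \<in> K" if "x \<in> K" for r x using csubspace_scaleR[OF sub that] .
  have cd: "(norm (f m - f n))^2 \<le> 2 / (real m + 1) + 2 / (real n + 1)" for m n
  proof -
    have mid: "scaleR (1/2) (f m + f n) \<in> K" using addK scK fK by blast
    have "(norm ((c - f m) + (c - f n)))^2 = 4 * (norm (c - scaleR (1/2) (f m + f n)))^2"
    proof -
      have "(c - f m) + (c - f n) = scaleR 2 (c - scaleR (1/2) (f m + f n))"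
        by (simp add: algebra_simps scaleR_2)
      then show ?thesis by (simp add: power2_eq_square)
    qed
    moreover have "(c - f m) - (c - f n) = - (f m - f n)" by simp
    ultimately have "4 * (norm (c - scaleR (1/2) (f m + f n)))^2 + (norm (f m - f n))^2
        = 2 * (norm (c - f m))^2 + 2 * (norm (c - f n))^2"
      using parallelogram[of "c - f m" "c - f n"] by (metis norm_minus_cancel)
    moreover have "\<delta> \<le> (norm (c - scaleR (1/2) (f m + f n)))^2" using delta_le mid by blast
    ultimately show ?thesis using fle[of m] fle[of n] by linarith
  qed
  have cauchy: "Cauchy f"
    unfolding Cauchy_def
  proof (intro allI impI)
    fix e :: real assume e: "e > 0"
    obtain M :: nat where M: "4 / e^2 < real M" using reals_Archimedean2 by blast
    have "\<forall>m\<ge>M. \<forall>n\<ge>M. dist (f m) (f n) < e"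
    proof (intro allI impI)
      fix m n assume mn: "M \<le> m" "M \<le> n"
      have e2: "e^2 > 0" using e by simp
      have "4 / e^2 < real M + 1" using M by simp
      then have M1: "4 / (real M + 1) < e^2" using e2 by (simp add: field_simps)
      have "2 / (real m + 1) \<le> 2 / (real M + 1)" using mn by (simp add: frac_le)
      moreover have "2 / (real n + 1) \<le> 2 / (real M + 1)" using mn by (simp add: frac_le)
      ultimately have "(norm (f m - f n))^2 < e^2" using cd[of m n] M1 by linarith
      then have "norm (f m - f n) < e" using e by (simp add: power_less_imp_less_base)
      then show "dist (f m) (f n) < e" by (simp add: dist_norm)
    qed
    then show "\<exists>M. \<forall>m\<ge>M. \<forall>n\<ge>M. dist (f m) (f n) < e" by blast
  qed
  obtain p where pK: "p \<in> K" and lim: "f \<longlonglongrightarrow> p"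
    using comp cauchy fK unfolding complete_def by blast
  have lim2: "(\<lambda>n. (norm (c - f n))^2) \<longlonglongrightarrow> (norm (c - p))^2"
    by (intro tendsto_intros lim)
  have limb: "(\<lambda>n. \<delta> + 1 / (real n + 1)) \<longlonglongrightarrow> \<delta>"
    using LIMSEQ_inverse_real_of_nat_add[of \<delta>] by (simp add: inverse_eq_divide add.commute)
  have pmin: "(norm (c - p))^2 \<le> \<delta>"
    using lim2 limb by (rule LIMSEQ_le) (use fle less_imp_le in auto)
  have orth: "inner (c - p) k = 0" if "k \<in> K" for k
  proof (rule min_orth[OF pK that])
    show "p + scaleR r k \<in> K" for r using addK scK pK that by blast
    show "(norm (c - p))^2 \<le> (norm (c - q))^2" if "q \<in> K" for q using pmin delta_le[OF that] by linarith
  qed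
  have "cinner k (c - p) = 0" if "k \<in> K" for k
  proof -
    have ik: "scaleC \<i> k \<in> K" using sub that by (simp add: csubspace_def)
    have "inner k (c - p) = 0" using orth[OF that] by (simp add: inner_commute)
    moreover have "inner k (scaleC \<i> (c - p)) = 0"
      using orth[OF ik] inner_ii_swap[of k "c - p"] by (simp add: inner_commute)
    ultimately show ?thesis by (simp add: cinner_def)
  qed
  then show ?thesis using pK by blast
qed



lemma ps_sub: "product_system E m \<Longrightarrow> t > 0 \<Longrightarrow> csubspace (E t)"
  by (drule product_system_def[THEN iffD1, THEN conjunct1]) simp
lemma ps_complete: "product_system E m \<Longrightarrow> t > 0 \<Longrightarrow> complete (E t)"
  by (drule product_system_def[THEN iffD1, THEN conjunct1]) simp
lemma ps_closed: "product_system E m \<Longrightarrow> t > 0 \<Longrightarrow> closed (E t)"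
  using ps_complete complete_imp_closed by blast
lemma ps_mem: "product_system E m \<Longrightarrow> s > 0 \<Longrightarrow> t > 0 \<Longrightarrow> x \<in> E s \<Longrightarrow> y \<in> E t \<Longrightarrow> m s t x y \<in> E (s + t)"
  by (drule product_system_def[THEN iffD1, THEN conjunct2, THEN conjunct1]) simp
lemma ps_inner: "product_system E m \<Longrightarrow> s > 0 \<Longrightarrow> t > 0 \<Longrightarrow> x \<in> E s \<Longrightarrow> x' \<in> E s \<Longrightarrow> y \<in> E t \<Longrightarrow> y' \<in> E t
   \<Longrightarrow> cinner (m s t x y) (m s t x' y') = cinner x x' * cinner y y'"
  by (drule product_system_def[THEN iffD1, THEN conjunct2, THEN conjunct2, THEN conjunct1]) simp
lemma ps_total: "product_system E m \<Longrightarrow> s > 0 \<Longrightarrow> t > 0 \<Longrightarrow> E (s + t) \<subseteq> closure (cspan {m s t x y |x y. x \<in> E s \<and> y \<in> E t})"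
  by (drule product_system_def[THEN iffD1, THEN conjunct2, THEN conjunct2, THEN conjunct2, THEN conjunct1]) simp

lemma sub0: "csubspace V \<Longrightarrow> 0 \<in> V" by (simp add: csubspace_def)
lemma subadd: "csubspace V \<Longrightarrow> x \<in> V \<Longrightarrow> y \<in> V \<Longrightarrow> x + y \<in> V" by (simp add: csubspace_def)
lemma subsc: "csubspace V \<Longrightarrow> x \<in> V \<Longrightarrow> scaleC c x \<in> V" by (simp add: csubspace_def)

lemma ps_orth_zero:
  assumes P: "product_system E m" and st: "s > 0" "t > 0" and z: "z \<in> E (s + t)"
    and orth: "\<And>x y. x \<in> E s \<Longrightarrow> y \<in> E t \<Longrightarrow> cinner (m s t x y) z = 0"
  shows "z = 0"
proof -
  let ?V = "{w. cinner w z = 0}"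
  have "{m s t x y |x y. x \<in> E s \<and> y \<in> E t} \<subseteq> ?V" using orth by blast
  then have "cspan {m s t x y |x y. x \<in> E s \<and> y \<in> E t} \<subseteq> ?V"
    using cspan_minimal csubspace_orth by blast
  then have "closure (cspan {m s t x y |x y. x \<in> E s \<and> y \<in> E t}) \<subseteq> ?V"
    using closure_minimal closed_orth by blast
  then have "z \<in> ?V" using ps_total[OF P st] z by blast
  then show ?thesis by (simp add: cinner_self_zero)
qed

lemma ps_add_left:
  assumes P: "product_system E m" and st: "s > 0" "t > 0"
    and x: "x \<in> E s" "x' \<in> E s" and y: "y \<in> E t"
  shows "m s t (x + x') y = m s t x y + m s t x' y"
proof -
  have xx: "x + x' \<in> E s" using subadd[OF ps_sub[OF P st(1)] x] .
  have "m s t (x + x') y - (m s t x y + m s t x' y) = 0"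
  proof (rule ps_orth_zero[OF P st])
    have st': "s + t > 0" using st by simp
    show "m s t (x + x') y - (m s t x y + m s t x' y) \<in> E (s + t)"
      by (intro csubspace_diff[OF ps_sub[OF P st']] subadd[OF ps_sub[OF P st']] ps_mem[OF P st] xx x y)
    fix e f assume e: "e \<in> E s" and f: "f \<in> E t"
    show "cinner (m s t e f) (m s t (x + x') y - (m s t x y + m s t x' y)) = 0"
      unfolding cinner_diff_right cinner_add_right ps_inner[OF P st e xx f y] ps_inner[OF P st e x(1) f y] ps_inner[OF P st e x(2) f y]
      by (simp add: cinner_add_right algebra_simps)
  qed
  then show ?thesis by simp
qed

lemma ps_add_right:
  assumes P: "product_system E m" and st: "s > 0" "t > 0"
    and x: "x \<in> E s" and y: "y \<in> E t" "y' \<in> E t"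
  shows "m s t x (y + y') = m s t x y + m s t x y'"
proof -
  have yy: "y + y' \<in> E t" using subadd[OF ps_sub[OF P st(2)] y] .
  have "m s t x (y + y') - (m s t x y + m s t x y') = 0"
  proof (rule ps_orth_zero[OF P st])
    have st': "s + t > 0" using st by simp
    show "m s t x (y + y') - (m s t x y + m s t x y') \<in> E (s + t)"
      by (intro csubspace_diff[OF ps_sub[OF P st']] subadd[OF ps_sub[OF P st']] ps_mem[OF P st] yy x y)
    fix e f assume e: "e \<in> E s" and f: "f \<in> E t"
    show "cinner (m s t e f) (m s t x (y + y') - (m s t x y + m s t x y')) = 0"
      unfolding cinner_diff_right cinner_add_right ps_inner[OF P st e x f yy] ps_inner[OF P st e x f y(1)] ps_inner[OF P st e x f y(2)]
      by (simp add: cinner_add_right algebra_simps)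
  qed
  then show ?thesis by simp
qed

lemma iso_mem: "isometric_morphism E mE G mG I \<Longrightarrow> t > 0 \<Longrightarrow> x \<in> E t \<Longrightarrow> I t x \<in> G t"
  by (drule isometric_morphism_def[THEN iffD1, THEN conjunct1]) simp
lemma iso_add: "isometric_morphism E mE G mG I \<Longrightarrow> t > 0 \<Longrightarrow> x \<in> E t \<Longrightarrow> y \<in> E t \<Longrightarrow> I t (x + y) = I t x + I t y"
  by (drule isometric_morphism_def[THEN iffD1, THEN conjunct2, THEN conjunct1]) simp
lemma iso_sc: "isometric_morphism E mE G mG I \<Longrightarrow> t > 0 \<Longrightarrow> x \<in> E t \<Longrightarrow> I t (scaleC c x) = scaleC c (I t x)"
  by (drule isometric_morphism_def[THEN iffD1, THEN conjunct2, THEN conjunct1]) blast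
lemma iso_inner: "isometric_morphism E mE G mG I \<Longrightarrow> t > 0 \<Longrightarrow> x \<in> E t \<Longrightarrow> y \<in> E t \<Longrightarrow> cinner (I t x) (I t y) = cinner x y"
  by (drule isometric_morphism_def[THEN iffD1, THEN conjunct2, THEN conjunct2, THEN conjunct1]) simp
lemma iso_mul: "isometric_morphism E mE G mG I \<Longrightarrow> s > 0 \<Longrightarrow> t > 0 \<Longrightarrow> x \<in> E s \<Longrightarrow> y \<in> E t \<Longrightarrow> I (s + t) (mE s t x y) = mG s t (I s x) (I t y)"
  by (drule isometric_morphism_def[THEN iffD1, THEN conjunct2, THEN conjunct2, THEN conjunct2]) simp

lemma rep_exists:
  fixes S :: "'a::complex_inner set" and I :: "'a \<Rightarrow> 'b::complex_inner"
  assumes comp: "complete S" and sub: "csubspace S"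
    and ladd: "\<And>x y. x \<in> S \<Longrightarrow> y \<in> S \<Longrightarrow> I (x + y) = I x + I y"
    and lsc: "\<And>x c. x \<in> S \<Longrightarrow> I (scaleC c x) = scaleC c (I x)"
    and iso: "\<And>x y. x \<in> S \<Longrightarrow> y \<in> S \<Longrightarrow> cinner (I x) (I y) = cinner x y"
  shows "\<exists>a\<in>S. \<forall>e\<in>S. cinner (I e) g = cinner e a"
proof -
  have S0: "0 \<in> S" using sub0[OF sub] .
  have I0: "I 0 = 0" using lsc[OF S0, of 0] by simp
  have Idiff: "I (x - y) = I x - I y" if "x \<in> S" "y \<in> S" for x y
  proof -
    have m: "scaleC (-1) y \<in> S" using subsc[OF sub that(2)] .
    have "I (x - y) = I (x + scaleC (-1) y)" by (simp add: scaleC_minus1)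
    also have "\<dots> = I x + scaleC (-1) (I y)" using ladd[OF that(1) m] lsc[OF that(2)] by simp
    also have "\<dots> = I x - I y" by (simp add: scaleC_minus1)
    finally show ?thesis .
  qed
  have nI: "norm (I x) = norm x" if "x \<in> S" for x
  proof -
    have "complex_of_real ((norm (I x))^2) = complex_of_real ((norm x)^2)"
      using iso[OF that that] by (simp add: cinner_self)
    then have "(norm (I x))^2 = (norm x)^2" by (simp only: of_real_eq_iff)
    then show ?thesis by (simp add: power2_eq_iff_nonneg)
  qed
  let ?K = "I ` S"
  have subK: "csubspace ?K"
    unfolding csubspace_def
  proof (intro conjI ballI allI)
    show "0 \<in> ?K" using S0 I0 by force
    fix x y assume "x \<in> ?K" "y \<in> ?K"
    then obtain x' y' where "x' \<in> S" "y' \<in> S" "x = I x'" "y = I y'" by blast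
    then show "x + y \<in> ?K" using ladd[of x' y'] subadd[OF sub, of x' y']
      by (intro image_eqI[of _ I "x' + y'"]) simp_all
  next
    fix c x assume "x \<in> ?K"
    then obtain x' where "x' \<in> S" "x = I x'" by blast
    then show "scaleC c x \<in> ?K" using lsc[of x' c] subsc[OF sub, of x' c]
      by (intro image_eqI[of _ I "scaleC c x'"]) simp_all
  qed
  have compK: "complete ?K"
    unfolding complete_def
  proof (intro allI impI)
    fix f assume fa: "(\<forall>n. f n \<in> ?K) \<and> Cauchy f"
    then have "\<forall>n. \<exists>x. x \<in> S \<and> f n = I x" by blast
    then obtain g where "\<forall>n. g n \<in> S \<and> f n = I (g n)" using choice[of "\<lambda>n x. x \<in> S \<and> f n = I x"] by blast
    then have gS: "\<And>n. g n \<in> S" and fg: "\<And>n. f n = I (g n)" by auto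
    have dg: "dist (g m) (g n) = dist (f m) (f n)" for m n
      unfolding fg dist_norm Idiff[OF gS gS, symmetric] nI[OF csubspace_diff[OF sub gS gS]] ..
    have "Cauchy g" using fa unfolding Cauchy_def dg by simp
    then have "\<exists>l\<in>S. g \<longlonglongrightarrow> l" using comp gS unfolding complete_def by blast
    then obtain l where lS: "l \<in> S" and gl: "g \<longlonglongrightarrow> l" by blast
    have dl: "dist (f n) (I l) = dist (g n) l" for n
      unfolding fg dist_norm Idiff[OF gS lS, symmetric] nI[OF csubspace_diff[OF sub gS lS]] ..
    have h: "(\<lambda>n. dist (g n) l) \<longlonglongrightarrow> 0" using tendsto_dist_iff[THEN iffD1, OF gl] .
    have "f \<longlonglongrightarrow> I l" by (rule tendsto_dist_iff[THEN iffD2]) (simp only: dl h)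
    then show "\<exists>l\<in>?K. f \<longlonglongrightarrow> l" using lS by blast
  qed
  obtain p where pK: "p \<in> ?K" and po: "\<forall>k\<in>?K. cinner k (g - p) = 0"
    using proj_exists[OF compK subK] by blast
  then obtain a where aS: "a \<in> S" and pa: "p = I a" by blast
  have "cinner (I e) g = cinner e a" if "e \<in> S" for e
  proof -
    have "cinner (I e) (g - I a) = 0" using po pa that by blast
    then show ?thesis using iso[OF that aS] by (simp add: cinner_diff_right)
  qed
  then show ?thesis using aS by blast
qed

lemma rep_family:
  assumes P: "product_system E mE" and iso: "isometric_morphism E mE G mG I"
  shows "\<exists>a. \<forall>t>0. a t \<in> E t \<and> (\<forall>e\<in>E t. cinner (I t e) (g t) = cinner e (a t))"
proof -
  have "\<exists>a. t > 0 \<longrightarrow> a \<in> E t \<and> (\<forall>e\<in>E t. cinner (I t e) (g t) = cinner e a)" for t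
  proof (cases "t > 0")
    case True
    have "\<exists>a\<in>E t. \<forall>e\<in>E t. cinner (I t e) (g t) = cinner e a"
    proof (rule rep_exists[OF ps_complete[OF P True] ps_sub[OF P True]])
      show "I t (x + y) = I t x + I t y" if "x \<in> E t" "y \<in> E t" for x y
        by (rule iso_add[OF iso True that])
      show "I t (scaleC c x) = scaleC c (I t x)" if "x \<in> E t" for x c
        by (rule iso_sc[OF iso True that])
      show "cinner (I t x) (I t y) = cinner x y" if "x \<in> E t" "y \<in> E t" for x y
        by (rule iso_inner[OF iso True that])
    qed
    then show ?thesis by blast
  qed simp
  then have "\<forall>t. \<exists>a. t > 0 \<longrightarrow> a \<in> E t \<and> (\<forall>e\<in>E t. cinner (I t e) (g t) = cinner e a)" by blast
  then obtain a where "\<forall>t. t > 0 \<longrightarrow> a t \<in> E t \<and> (\<forall>e\<in>E t. cinner (I t e) (g t) = cinner e (a t))"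
    by (rule choice[THEN exE])
  then show ?thesis by blast
qed



lemma unit_ident:
  assumes iI: "isometric_morphism E mE G mG I" and iJ: "isometric_morphism F mF G mG J"
    and cross: "\<forall>t>0. \<forall>x\<in>E t. \<forall>y\<in>F t. cinner (I t x) (J t y) = cinner x (scaleC (cinner (v0 t) y) (u0 t))"
    and t: "t > 0" and u: "u0 t \<in> E t" "norm (u0 t) = 1" and v: "v0 t \<in> F t" "norm (v0 t) = 1"
  shows "I t (u0 t) = J t (v0 t)"
proof -
  have uu: "cinner (u0 t) (u0 t) = 1" using u by (simp add: cinner_self)
  have vv: "cinner (v0 t) (v0 t) = 1" using v by (simp add: cinner_self)
  have aa: "cinner (I t (u0 t)) (I t (u0 t)) = 1" using iso_inner[OF iI t u(1) u(1)] uu by simp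
  have bb: "cinner (J t (v0 t)) (J t (v0 t)) = 1" using iso_inner[OF iJ t v(1) v(1)] vv by simp
  have ab: "cinner (I t (u0 t)) (J t (v0 t)) = 1" using cross t u v by (simp add: cinner_scaleC_right uu vv)
  have ba: "cinner (J t (v0 t)) (I t (u0 t)) = 1" using ab cinner_commute[of "J t (v0 t)" "I t (u0 t)"] by simp
  have "cinner (I t (u0 t) - J t (v0 t)) (I t (u0 t) - J t (v0 t)) = 0"
    by (simp add: cinner_diff_left cinner_diff_right aa bb ab ba)
  then show ?thesis by (simp add: cinner_self_zero)
qed

lemma sup_root:
  assumes PE: "product_system E mE" and PF: "product_system F mF" and PG: "product_system G mG"
    and iI: "isometric_morphism E mE G mG I" and iJ: "isometric_morphism F mF G mG J"
    and sig: "\<And>t. t > 0 \<Longrightarrow> J t (v0 t) = I t (u0 t)"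
    and uE: "is_unit E mE u0" and vF: "is_unit F mF v0"
    and a: "is_root E mE u0 a" and b: "is_root F mF v0 b"
  shows "is_root G mG (\<lambda>t. I t (u0 t)) (\<lambda>t. I t (a t) + J t (b t))"
proof -
  have uE1: "\<And>t. t > 0 \<Longrightarrow> u0 t \<in> E t" using uE unfolding is_unit_def by blast
  have vF1: "\<And>t. t > 0 \<Longrightarrow> v0 t \<in> F t" using vF unfolding is_unit_def by blast
  have aE: "\<And>t. t > 0 \<Longrightarrow> a t \<in> E t" and aadd: "\<And>s t. s > 0 \<Longrightarrow> t > 0 \<Longrightarrow> a (s + t) = mE s t (a s) (u0 t) + mE s t (u0 s) (a t)"
    and ao: "\<And>t. t > 0 \<Longrightarrow> cinner (a t) (u0 t) = 0"
    using a unfolding is_root_def additive_unit_def by blast+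
  have bF: "\<And>t. t > 0 \<Longrightarrow> b t \<in> F t" and badd: "\<And>s t. s > 0 \<Longrightarrow> t > 0 \<Longrightarrow> b (s + t) = mF s t (b s) (v0 t) + mF s t (v0 s) (b t)"
    and bo: "\<And>t. t > 0 \<Longrightarrow> cinner (b t) (v0 t) = 0"
    using b unfolding is_root_def additive_unit_def by blast+
  show ?thesis
    unfolding is_root_def additive_unit_def
  proof (intro conjI allI impI)
    fix t :: real assume t: "t > 0"
    show "I t (a t) + J t (b t) \<in> G t"
      using subadd[OF ps_sub[OF PG t]] iso_mem[OF iI t aE[OF t]] iso_mem[OF iJ t bF[OF t]] by blast
    show "cinner (I t (a t) + J t (b t)) (I t (u0 t)) = 0"
      using iso_inner[OF iI t aE[OF t] uE1[OF t]] iso_inner[OF iJ t bF[OF t] vF1[OF t]] sig[OF t] ao[OF t] bo[OF t]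
      by (simp add: cinner_add_left)
  next
    fix s t :: real assume s: "s > 0" and t: "t > 0"
    have st: "s + t > 0" using s t by simp
    have IA: "I (s + t) (a (s + t)) = mG s t (I s (a s)) (I t (u0 t)) + mG s t (I s (u0 s)) (I t (a t))"
      using aadd[OF s t] iso_add[OF iI st] ps_mem[OF PE s t] aE uE1 s t iso_mul[OF iI s t] by simp
    have JB: "J (s + t) (b (s + t)) = mG s t (J s (b s)) (I t (u0 t)) + mG s t (I s (u0 s)) (J t (b t))"
      using badd[OF s t] iso_add[OF iJ st] ps_mem[OF PF s t] bF vF1 s t iso_mul[OF iJ s t] sig[OF s] sig[OF t] by simp
    have L: "mG s t (I s (a s) + J s (b s)) (I t (u0 t)) = mG s t (I s (a s)) (I t (u0 t)) + mG s t (J s (b s)) (I t (u0 t))"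
      by (rule ps_add_left[OF PG s t iso_mem[OF iI s aE[OF s]] iso_mem[OF iJ s bF[OF s]] iso_mem[OF iI t uE1[OF t]]])
    have R: "mG s t (I s (u0 s)) (I t (a t) + J t (b t)) = mG s t (I s (u0 s)) (I t (a t)) + mG s t (I s (u0 s)) (J t (b t))"
      by (rule ps_add_right[OF PG s t iso_mem[OF iI s uE1[OF s]] iso_mem[OF iI t aE[OF t]] iso_mem[OF iJ t bF[OF t]]])
    show "I (s + t) (a (s + t)) + J (s + t) (b (s + t)) =
        mG s t (I s (a s) + J s (b s)) (I t (u0 t)) + mG s t (I s (u0 s)) (I t (a t) + J t (b t))"
      using IA JB L R by (simp add: algebra_simps)
  qed
qed

lemma proj_root:
  assumes PE: "product_system E mE" and PG: "product_system G mG"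
    and iI: "isometric_morphism E mE G mG I" and uE: "is_unit E mE u"
    and sig: "\<And>t. t > 0 \<Longrightarrow> I t (u t) = \<sigma> t"
    and c: "is_root G mG \<sigma> c"
    and a: "\<forall>t>0. a t \<in> E t \<and> (\<forall>e\<in>E t. cinner (I t e) (c t) = cinner e (a t))"
  shows "is_root E mE u a"
proof -
  have uE1: "\<And>t. t > 0 \<Longrightarrow> u t \<in> E t" and uadd: "\<And>s t. s > 0 \<Longrightarrow> t > 0 \<Longrightarrow> u (s + t) = mE s t (u s) (u t)"
    using uE unfolding is_unit_def by blast+
  have cG: "\<And>t. t > 0 \<Longrightarrow> c t \<in> G t" and cadd: "\<And>s t. s > 0 \<Longrightarrow> t > 0 \<Longrightarrow> c (s + t) = mG s t (c s) (\<sigma> t) + mG s t (\<sigma> s) (c t)"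
    and co: "\<And>t. t > 0 \<Longrightarrow> cinner (c t) (\<sigma> t) = 0"
    using c unfolding is_root_def additive_unit_def by blast+
  have aE: "\<And>t. t > 0 \<Longrightarrow> a t \<in> E t" and arep: "\<And>t e. t > 0 \<Longrightarrow> e \<in> E t \<Longrightarrow> cinner (I t e) (c t) = cinner e (a t)"
    using a by blast+
  have sG: "\<And>t. t > 0 \<Longrightarrow> \<sigma> t \<in> G t" using iso_mem[OF iI] uE1 sig by metis
  show ?thesis
    unfolding is_root_def additive_unit_def
  proof (intro conjI allI impI)
    fix t :: real assume t: "t > 0"
    show "a t \<in> E t" using aE[OF t] .
    have "cinner (u t) (a t) = cinner (\<sigma> t) (c t)" using arep[OF t uE1[OF t]] sig[OF t] by simp
    also have "\<dots> = cnj (cinner (c t) (\<sigma> t))" by (rule cinner_commute)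
    finally have "cinner (u t) (a t) = 0" using co[OF t] by simp
    then show "cinner (a t) (u t) = 0" using cinner_commute[of "a t" "u t"] by simp
  next
    fix s t :: real assume s: "s > 0" and t: "t > 0"
    have st: "s + t > 0" using s t by simp
    have "a (s + t) - (mE s t (a s) (u t) + mE s t (u s) (a t)) = 0"
    proof (rule ps_orth_zero[OF PE s t])
      show "a (s + t) - (mE s t (a s) (u t) + mE s t (u s) (a t)) \<in> E (s + t)"
        using csubspace_diff[OF ps_sub[OF PE st]] subadd[OF ps_sub[OF PE st]] aE[OF st]
          ps_mem[OF PE s t] aE uE1 s t by simp
      fix x y assume x: "x \<in> E s" and y: "y \<in> E t"
      have "cinner (mE s t x y) (a (s + t)) = cinner (I (s + t) (mE s t x y)) (c (s + t))"
        using arep[OF st ps_mem[OF PE s t x y]] by simp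
      also have "\<dots> = cinner (mG s t (I s x) (I t y)) (mG s t (c s) (\<sigma> t) + mG s t (\<sigma> s) (c t))"
        using iso_mul[OF iI s t x y] cadd[OF s t] by simp
      also have "\<dots> = cinner (I s x) (c s) * cinner (I t y) (\<sigma> t) + cinner (I s x) (\<sigma> s) * cinner (I t y) (c t)"
        using ps_inner[OF PG s t] iso_mem[OF iI] x y s t cG sG by (simp add: cinner_add_right)
      also have "\<dots> = cinner x (a s) * cinner y (u t) + cinner x (u s) * cinner y (a t)"
        using arep[OF s x] arep[OF t y] iso_inner[OF iI s x uE1[OF s]] iso_inner[OF iI t y uE1[OF t]] sig[OF s] sig[OF t]
        by simp
      also have "\<dots> = cinner (mE s t x y) (mE s t (a s) (u t) + mE s t (u s) (a t))"
        using ps_inner[OF PE s t] x y aE uE1 s t by (simp add: cinner_add_right)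
      finally show "cinner (mE s t x y) (a (s + t) - (mE s t (a s) (u t) + mE s t (u s) (a t))) = 0"
        by (simp add: cinner_diff_right)
    qed
    then show "a (s + t) = mE s t (a s) (u t) + mE s t (u s) (a t)" by simp
  qed
qed

lemma gen_eq:
  assumes PG: "product_system G mG" and gen: "generated_by G mG S"
    and Ssub: "\<And>t x. t > 0 \<Longrightarrow> x \<in> S t \<Longrightarrow> cinner x (c t - w t) = 0"
    and SG: "\<And>t. t > 0 \<Longrightarrow> S t \<subseteq> G t"
    and sG: "\<And>t. t > 0 \<Longrightarrow> \<sigma> t \<in> G t"
    and c: "additive_unit G mG \<sigma> c" and w: "additive_unit G mG \<sigma> w"
    and t: "t > 0"
  shows "c t = w t"
proof -
  have cG: "\<And>t. t > 0 \<Longrightarrow> c t \<in> G t" and cadd: "\<And>s t. s > 0 \<Longrightarrow> t > 0 \<Longrightarrow> c (s + t) = mG s t (c s) (\<sigma> t) + mG s t (\<sigma> s) (c t)"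
    using c unfolding additive_unit_def by blast+
  have wG: "\<And>t. t > 0 \<Longrightarrow> w t \<in> G t" and wadd: "\<And>s t. s > 0 \<Longrightarrow> t > 0 \<Longrightarrow> w (s + t) = mG s t (w s) (\<sigma> t) + mG s t (\<sigma> s) (w t)"
    using w unfolding additive_unit_def by blast+
  define H where "H t = G t \<inter> {x. cinner x (c t - w t) = 0}" for t
  have H1: "\<forall>t>0. csubspace (H t) \<and> closed (H t) \<and> S t \<subseteq> H t \<and> H t \<subseteq> G t"
  proof (intro allI impI conjI)
    fix t :: real assume t: "t > 0"
    show "csubspace (H t)" unfolding H_def by (intro csubspace_Int ps_sub[OF PG t] csubspace_orth)
    show "closed (H t)" unfolding H_def by (intro closed_Int ps_closed[OF PG t] closed_orth)
    show "S t \<subseteq> H t" unfolding H_def using SG[OF t] Ssub[OF t] by blast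
    show "H t \<subseteq> G t" unfolding H_def by blast
  qed
  have H2: "\<forall>s>0. \<forall>t>0. \<forall>x\<in>H s. \<forall>y\<in>H t. mG s t x y \<in> H (s + t)"
  proof (intro allI impI ballI)
    fix s t :: real and x y assume s: "s > 0" and t: "t > 0" and x: "x \<in> H s" and y: "y \<in> H t"
    have xG: "x \<in> G s" and yG: "y \<in> G t" using x y unfolding H_def by blast+
    have xo: "cinner x (c s) = cinner x (w s)" using x unfolding H_def by (simp add: cinner_diff_right)
    have yo: "cinner y (c t) = cinner y (w t)" using y unfolding H_def by (simp add: cinner_diff_right)
    have i1: "cinner (mG s t x y) (mG s t (c s) (\<sigma> t)) = cinner x (c s) * cinner y (\<sigma> t)"
      by (rule ps_inner[OF PG s t xG cG[OF s] yG sG[OF t]])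
    have i2: "cinner (mG s t x y) (mG s t (\<sigma> s) (c t)) = cinner x (\<sigma> s) * cinner y (c t)"
      by (rule ps_inner[OF PG s t xG sG[OF s] yG cG[OF t]])
    have i3: "cinner (mG s t x y) (mG s t (w s) (\<sigma> t)) = cinner x (w s) * cinner y (\<sigma> t)"
      by (rule ps_inner[OF PG s t xG wG[OF s] yG sG[OF t]])
    have i4: "cinner (mG s t x y) (mG s t (\<sigma> s) (w t)) = cinner x (\<sigma> s) * cinner y (w t)"
      by (rule ps_inner[OF PG s t xG sG[OF s] yG wG[OF t]])
    have "cinner (mG s t x y) (c (s + t) - w (s + t)) = 0"
      unfolding cadd[OF s t] wadd[OF s t] cinner_diff_right cinner_add_right i1 i2 i3 i4 xo yo
      by simp
    then show "mG s t x y \<in> H (s + t)" unfolding H_def using ps_mem[OF PG s t xG yG] by blast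
  qed
  have HG: "\<forall>t>0. H t = G t"
    using gen H1 H2 unfolding generated_by_def by blast
  have "c t - w t \<in> G t" using csubspace_diff[OF ps_sub[OF PG t]] cG[OF t] wG[OF t] .
  then have "c t - w t \<in> H t" using HG t by blast
  then show ?thesis unfolding H_def by (simp add: cinner_self_zero)
qed



theorem mainTheorem7:
  fixes E :: "real \<Rightarrow> 'e::complex_inner set" and mE :: "real \<Rightarrow> real \<Rightarrow> 'e \<Rightarrow> 'e \<Rightarrow> 'e"
    and F :: "real \<Rightarrow> 'f::complex_inner set" and mF :: "real \<Rightarrow> real \<Rightarrow> 'f \<Rightarrow> 'f \<Rightarrow> 'f"
    and G :: "real \<Rightarrow> 'g::complex_inner set" and mG :: "real \<Rightarrow> real \<Rightarrow> 'g \<Rightarrow> 'g \<Rightarrow> 'g"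
    and u0 :: "real \<Rightarrow> 'e" and v0 :: "real \<Rightarrow> 'f"
    and I :: "real \<Rightarrow> 'e \<Rightarrow> 'g" and J :: "real \<Rightarrow> 'f \<Rightarrow> 'g"
  assumes "product_system E mE" and "product_system F mF"
    and "normalized_unit E mE u0" and "normalized_unit F mF v0"
    and "amalgamated_product E mE F mF (\<lambda>t y. scaleC (cinner (v0 t) y) (u0 t)) G mG I J"
  shows "roots G mG (\<lambda>t. I t (u0 t))
           = {I 1 x + J 1 y |x y. x \<in> roots E mE u0 \<and> y \<in> roots F mF v0}
         \<and> (\<forall>x\<in>roots E mE u0. \<forall>y\<in>roots F mF v0. cinner (I 1 x) (J 1 y) = 0)"
proof -
  note PE = assms(1) and PF = assms(2)
  have uE: "is_unit E mE u0" and un: "\<And>t. t > 0 \<Longrightarrow> norm (u0 t) = 1"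
    using assms(3) unfolding normalized_unit_def by blast+
  have vF: "is_unit F mF v0" and vn: "\<And>t. t > 0 \<Longrightarrow> norm (v0 t) = 1"
    using assms(4) unfolding normalized_unit_def by blast+
  have uE1: "\<And>t. t > 0 \<Longrightarrow> u0 t \<in> E t" using uE unfolding is_unit_def by blast
  have vF1: "\<And>t. t > 0 \<Longrightarrow> v0 t \<in> F t" using vF unfolding is_unit_def by blast
  have PG: "product_system G mG" and iI: "isometric_morphism E mE G mG I"
    and iJ: "isometric_morphism F mF G mG J"
    and cross: "\<forall>t>0. \<forall>x\<in>E t. \<forall>y\<in>F t. cinner (I t x) (J t y) = cinner x (scaleC (cinner (v0 t) y) (u0 t))"
    and gen: "generated_by G mG (\<lambda>t. I t ` E t \<union> J t ` F t)"
    using assms(5) unfolding amalgamated_product_def by blast+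
  have sig: "\<And>t. t > 0 \<Longrightarrow> J t (v0 t) = I t (u0 t)"
    using unit_ident[OF iI iJ cross] uE1 vF1 un vn by metis
  have one: "(1::real) > 0" by simp
  have orth: "cinner (I 1 x) (J 1 y) = 0" if x: "x \<in> roots E mE u0" and y: "y \<in> roots F mF v0" for x y
  proof -
    obtain a where a: "is_root E mE u0 a" and xa: "x = a 1" using x unfolding roots_def by blast
    obtain b where b: "is_root F mF v0 b" and yb: "y = b 1" using y unfolding roots_def by blast
    have aE: "a 1 \<in> E 1" using a one unfolding is_root_def additive_unit_def by blast
    have bF: "b 1 \<in> F 1" using b one unfolding is_root_def additive_unit_def by blast
    have bo: "cinner (b 1) (v0 1) = 0" using b one unfolding is_root_def by blast
    have "cinner (v0 1) (b 1) = 0" using bo cinner_commute[of "v0 1" "b 1"] by simp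
    then show ?thesis using cross one aE bF xa yb by simp
  qed
  have sup: "I 1 x + J 1 y \<in> roots G mG (\<lambda>t. I t (u0 t))" if x: "x \<in> roots E mE u0" and y: "y \<in> roots F mF v0" for x y
  proof -
    obtain a where a: "is_root E mE u0 a" and xa: "x = a 1" using x unfolding roots_def by blast
    obtain b where b: "is_root F mF v0 b" and yb: "y = b 1" using y unfolding roots_def by blast
    have "is_root G mG (\<lambda>t. I t (u0 t)) (\<lambda>t. I t (a t) + J t (b t))"
      by (rule sup_root[OF PE PF PG iI iJ sig uE vF a b])
    then show ?thesis unfolding roots_def xa yb by force
  qed
  have sub: "z \<in> {I 1 x + J 1 y |x y. x \<in> roots E mE u0 \<and> y \<in> roots F mF v0}"
    if z: "z \<in> roots G mG (\<lambda>t. I t (u0 t))" for z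
  proof -
    obtain c where c: "is_root G mG (\<lambda>t. I t (u0 t)) c" and zc: "z = c 1" using z unfolding roots_def by blast
    have cG: "\<And>t. t > 0 \<Longrightarrow> c t \<in> G t" and co: "\<And>t. t > 0 \<Longrightarrow> cinner (c t) (I t (u0 t)) = 0"
      using c unfolding is_root_def additive_unit_def by blast+
    obtain a where ar: "\<forall>t>0. a t \<in> E t \<and> (\<forall>e\<in>E t. cinner (I t e) (c t) = cinner e (a t))"
      using rep_family[OF PE iI] by blast
    obtain b where br: "\<forall>t>0. b t \<in> F t \<and> (\<forall>e\<in>F t. cinner (J t e) (c t) = cinner e (b t))"
      using rep_family[OF PF iJ] by blast
    have a: "is_root E mE u0 a" by (rule proj_root[OF PE PG iI uE _ c ar]) simp
    have b: "is_root F mF v0 b" by (rule proj_root[OF PF PG iJ vF _ c br]) (rule sig)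
    have w: "is_root G mG (\<lambda>t. I t (u0 t)) (\<lambda>t. I t (a t) + J t (b t))"
      by (rule sup_root[OF PE PF PG iI iJ sig uE vF a b])
    have aE: "\<And>t. t > 0 \<Longrightarrow> a t \<in> E t" and arep: "\<And>t e. t > 0 \<Longrightarrow> e \<in> E t \<Longrightarrow> cinner (I t e) (c t) = cinner e (a t)"
      using ar by blast+
    have bF: "\<And>t. t > 0 \<Longrightarrow> b t \<in> F t" and brep: "\<And>t e. t > 0 \<Longrightarrow> e \<in> F t \<Longrightarrow> cinner (J t e) (c t) = cinner e (b t)"
      using br by blast+
    have ao: "\<And>t. t > 0 \<Longrightarrow> cinner (a t) (u0 t) = 0" using a unfolding is_root_def by blast
    have vb: "cinner (v0 t) (b t) = 0" if t: "t > 0" for t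
    proof -
      have "cinner (v0 t) (b t) = cinner (I t (u0 t)) (c t)" using brep[OF t vF1[OF t]] sig[OF t] by simp
      also have "\<dots> = cnj (cinner (c t) (I t (u0 t)))" by (rule cinner_commute)
      finally show ?thesis using co[OF t] by simp
    qed
    have "c 1 = I 1 (a 1) + J 1 (b 1)"
    proof (rule gen_eq[OF PG gen, where \<sigma> = "\<lambda>t. I t (u0 t)" and w = "\<lambda>t. I t (a t) + J t (b t)", OF _ _ _ _ _ one])
      show "additive_unit G mG (\<lambda>t. I t (u0 t)) c" using c unfolding is_root_def by blast
      show "additive_unit G mG (\<lambda>t. I t (u0 t)) (\<lambda>t. I t (a t) + J t (b t))" using w unfolding is_root_def by blast
      show "I t (u0 t) \<in> G t" if "t > 0" for t using iso_mem[OF iI that uE1[OF that]] .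
      show "I t ` E t \<union> J t ` F t \<subseteq> G t" if "t > 0" for t using iso_mem[OF iI that] iso_mem[OF iJ that] by blast
      show "cinner x (c t - (I t (a t) + J t (b t))) = 0" if t: "t > 0" and x: "x \<in> I t ` E t \<union> J t ` F t" for t x
      proof -
        from x consider (i) e where "e \<in> E t" "x = I t e" | (j) f where "f \<in> F t" "x = J t f" by blast
        then show ?thesis
        proof cases
          case i
          have "cinner (I t e) (J t (b t)) = 0" using cross t i(1) bF[OF t] vb[OF t] by simp
          then show ?thesis using i arep[OF t i(1)] iso_inner[OF iI t i(1) aE[OF t]]
            by (simp add: cinner_diff_right cinner_add_right)
        next
          case j
          have "cinner (I t (a t)) (J t f) = 0" using cross t j(1) aE[OF t] ao[OF t]
            by (simp add: cinner_scaleC_right)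
          then have "cinner (J t f) (I t (a t)) = 0" using cinner_commute[of "J t f" "I t (a t)"] by simp
          then show ?thesis using j brep[OF t j(1)] iso_inner[OF iJ t j(1) bF[OF t]]
            by (simp add: cinner_diff_right cinner_add_right)
        qed
      qed
    qed
    moreover have "a 1 \<in> roots E mE u0" using a unfolding roots_def by blast
    moreover have "b 1 \<in> roots F mF v0" using b unfolding roots_def by blast
    ultimately show ?thesis using zc by blast
  qed
  show ?thesis using sup sub orth by blast
qed

end
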